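(* Consider $\mathrm{USD}_p$ with $p\in[0,1]$ and let $c_s>0$ be an arbitrary constant. Let $\mathbf{x}(t_0)$ be a configuration at time $t_0$ with weighted bias $\Delta_w(t_0) \geq c_s n$. Let $T_1 := \inf\{t \geq t_0 : x_2(t) = 0\}$. Then $\Pr[T_1 - t_0 \leq 20 c_s^{-1} n\log n] \geq 1-n^{-2}$.
   Context: Population protocol with $n$ agents, each in a state from $\{1,2,\bot\}$ (Opinion 1, Opinion 2, undecided). At each time step a scheduler picks an ordered pair $(i,j)$ of agents uniformly at random, independently of the past; only the initiator $i$ changes state. In $\mathrm{USD}_p$: if the initiator is $2$ and the responder $1$, the initiator becomes $\bot$; if the initiator is $1$ and the responder $2$, the initiator becomes $\bot$ with probability $1-p$ and otherwise stays $1$; if the initiator is $\bot$, it adopts the responder's state; otherwise nothing changes. $x_1(t),x_2(t),u(t)$ are the numbers of agents in states $1,2,\bot$ after $t$ interactions. The weighted bias is $\Delta_w(t) := x_1(t) - (1-p)x_2(t)$. *)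

theory Defs
  imports "HOL-Probability.Probability_Mass_Function"
begin

datatype st = One | Two | Und

text \<open>A configuration of n agents: agent i (for i < n) is in state cfg i.\<close>
type_synonym cfg = "nat \<Rightarrow> st"

definition cnt1 :: "nat \<Rightarrow> cfg \<Rightarrow> nat" where
  "cnt1 n c = card {i. i < n \<and> c i = One}"

definition cnt2 :: "nat \<Rightarrow> cfg \<Rightarrow> nat" where
  "cnt2 n c = card {i. i < n \<and> c i = Two}"

definition cntU :: "nat \<Rightarrow> cfg \<Rightarrow> nat" where
  "cntU n c = card {i. i < n \<and> c i = Und}"

definition wbias :: "real \<Rightarrow> nat \<Rightarrow> cfg \<Rightarrow> real" where
  "wbias p n c = real (cnt1 n c) - (1 - p) * real (cnt2 n c)"

text \<open>New state of the initiator (first argument) after meeting the responder.\<close>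
definition usd_interact :: "real \<Rightarrow> st \<Rightarrow> st \<Rightarrow> st pmf" where
  "usd_interact p a b =
     (if a = Two \<and> b = One then return_pmf Und
      else if a = One \<and> b = Two then
        map_pmf (\<lambda>becomes_und. if becomes_und then Und else One) (bernoulli_pmf (1 - p))
      else if a = Und then return_pmf b
      else return_pmf a)"

definition usd_step :: "nat \<Rightarrow> real \<Rightarrow> cfg \<Rightarrow> cfg pmf" where
  "usd_step n p c =
     bind_pmf (pmf_of_set {(i, j). i < n \<and> j < n \<and> i \<noteq> j})
       (\<lambda>(i, j). map_pmf (\<lambda>s. c(i := s)) (usd_interact p (c i) (c j)))"

text \<open>Distribution of the trajectory [x(t0), x(t0+1), ..., x(t0+k)] started in c.\<close>
fun usd_traj :: "nat \<Rightarrow> real \<Rightarrow> nat \<Rightarrow> cfg \<Rightarrow> cfg list pmf" where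
  "usd_traj n p 0 c = return_pmf [c]"
| "usd_traj n p (Suc k) c =
     bind_pmf (usd_step n p c) (\<lambda>c'. map_pmf (\<lambda>xs. c # xs) (usd_traj n p k c'))"

end

theory Submission
  imports Defs "HOL-Real_Asymp.Real_Asymp"
begin

lemma cnt_Suc:
  "cnt1 (Suc n) c = cnt1 n c + (if c n = One then 1 else 0)"
  "cnt2 (Suc n) c = cnt2 n c + (if c n = Two then 1 else 0)"
  "cntU (Suc n) c = cntU n c + (if c n = Und then 1 else 0)"
proof -
  have e: "\<And>s. {i. i < Suc n \<and> c i = s} = {i. i < n \<and> c i = s} \<union> (if c n = s then {n} else {})"
    by (auto simp: less_Suc_eq)
  have f: "\<And>s. finite {i. i < n \<and> c i = s}" by auto
  have d: "\<And>s. n \<notin> {i. i < n \<and> c i = s}" by auto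
  show "cnt1 (Suc n) c = cnt1 n c + (if c n = One then 1 else 0)"
    unfolding cnt1_def e using f d by (auto simp: card_insert_if)
  show "cnt2 (Suc n) c = cnt2 n c + (if c n = Two then 1 else 0)"
    unfolding cnt2_def e using f d by (auto simp: card_insert_if)
  show "cntU (Suc n) c = cntU n c + (if c n = Und then 1 else 0)"
    unfolding cntU_def e using f d by (auto simp: card_insert_if)
qed

lemma cnt_0: "cnt1 0 c = 0" "cnt2 0 c = 0" "cntU 0 c = 0"
  by (auto simp: cnt1_def cnt2_def cntU_def)

lemma cnt_total: "cnt1 n c + cnt2 n c + cntU n c = n"
proof (induction n)
  case 0 then show ?case by (simp add: cnt_0)
next
  case (Suc n) then show ?case by (cases "c n") (simp_all add: cnt_Suc)
qed

lemma sum_states: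
  "(\<Sum>i<n. (\<phi> (c i) :: real)) =
     real (cnt1 n c) * \<phi> One + real (cnt2 n c) * \<phi> Two + real (cntU n c) * \<phi> Und"
proof (induction n)
  case 0 then show ?case by (simp add: cnt_0)
next
  case (Suc n) then show ?case by (cases "c n") (simp_all add: cnt_Suc algebra_simps)
qed

lemma cnt_upd:
  assumes "i < n"
  shows "cnt1 n (c(i := s)) = cnt1 n c - (if c i = One then 1 else 0) + (if s = One then 1 else 0)"
    and "cnt2 n (c(i := s)) = cnt2 n c - (if c i = Two then 1 else 0) + (if s = Two then 1 else 0)"
proof -
  have key: "card {k. k < n \<and> (c(i := s)) k = a} =
      card {k. k < n \<and> c k = a} - (if c i = a then 1 else 0) + (if s = a then 1 else 0)" for a
  proof -
    let ?A = "{k. k < n \<and> c k = a}"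
    have e: "{k. k < n \<and> (c(i := s)) k = a} = (?A - {i}) \<union> (if s = a then {i} else {})"
      using assms by auto
    have f: "finite (?A - {i})" by auto
    have c1: "card (?A - {i}) = card ?A - (if c i = a then 1 else 0)"
      using assms by (auto simp: card_Diff_singleton_if)
    have p: "c i = a \<Longrightarrow> card ?A \<ge> 1"
      using assms by (metis (mono_tags, lifting) One_nat_def Suc_leI card_gt_0_iff empty_iff finite_nat_set_iff_bounded mem_Collect_eq)
    show ?thesis unfolding e using f c1 p by (auto simp: card_insert_if)
  qed
  show "cnt1 n (c(i := s)) = cnt1 n c - (if c i = One then 1 else 0) + (if s = One then 1 else 0)"
    unfolding cnt1_def by (rule key)
  show "cnt2 n (c(i := s)) = cnt2 n c - (if c i = Two then 1 else 0) + (if s = Two then 1 else 0)"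
    unfolding cnt2_def by (rule key)
qed

lemma cnt1_le: "cnt1 n c \<le> n" and cnt2_le: "cnt2 n c \<le> n"
  using cnt_total[of n c] by auto

lemma cnt1_pos_if: "c i = One \<Longrightarrow> i < n \<Longrightarrow> cnt1 n c \<ge> 1"
  unfolding cnt1_def by (metis (mono_tags, lifting) One_nat_def Suc_leI card_gt_0_iff empty_iff finite_nat_set_iff_bounded mem_Collect_eq)
lemma cnt2_pos_if: "c i = Two \<Longrightarrow> i < n \<Longrightarrow> cnt2 n c \<ge> 1"
  unfolding cnt2_def by (metis (mono_tags, lifting) One_nat_def Suc_leI card_gt_0_iff empty_iff finite_nat_set_iff_bounded mem_Collect_eq)

section \<open>One step expectation\<close>

definition Hv :: "real \<Rightarrow> (nat \<Rightarrow> nat \<Rightarrow> real) \<Rightarrow> nat \<Rightarrow> nat \<Rightarrow> st \<Rightarrow> st \<Rightarrow> real" where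
  "Hv p F a b s t =
    (if s = Two \<and> t = One then F a (b - 1)
     else if s = One \<and> t = Two then (1 - p) * F (a - 1) b + p * F a b
     else if s = Und \<and> t = One then F (a + 1) b
     else if s = Und \<and> t = Two then F a (b + 1)
     else F a b)"

lemma inner_exp:
  assumes "i < n" "0 \<le> p" "p \<le> 1"
  shows "measure_pmf.expectation (map_pmf (\<lambda>s. c(i := s)) (usd_interact p (c i) t))
           (\<lambda>c'. F (cnt1 n c') (cnt2 n c')) = Hv p F (cnt1 n c) (cnt2 n c) (c i) t"
proof -
  have u1: "cnt1 n (c(i := s)) = cnt1 n c - (if c i = One then 1 else 0) + (if s = One then 1 else 0)"
   and u2: "cnt2 n (c(i := s)) = cnt2 n c - (if c i = Two then 1 else 0) + (if s = Two then 1 else 0)" for s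
    using cnt_upd[OF assms(1)] by auto
  have p1: "c i = One \<Longrightarrow> cnt1 n c \<ge> 1" using cnt1_pos_if assms(1) by auto
  have p2: "c i = Two \<Longrightarrow> cnt2 n c \<ge> 1" using cnt2_pos_if assms(1) by auto
  show ?thesis
    using p1 p2 assms(2,3)
    by (cases "c i"; cases t) (simp_all add: usd_interact_def Hv_def u1 u2)
qed

lemma finite_set_usd_interact: "finite (set_pmf (usd_interact p a b))"
  unfolding usd_interact_def by (auto)

definition pairs :: "nat \<Rightarrow> (nat \<times> nat) set" where
  "pairs n = {(i, j). i < n \<and> j < n \<and> i \<noteq> j}"

lemma pairs_Sigma: "pairs n = Sigma {..<n} (\<lambda>i. {..<n} - {i})"
  unfolding pairs_def by auto

lemma pairs_finite: "finite (pairs n)"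
  unfolding pairs_Sigma by auto

lemma pairs_card: "card (pairs n) = n * (n - 1)"
  unfolding pairs_Sigma by (simp add: card_SigmaI)

lemma pairs_ne: "n \<ge> 2 \<Longrightarrow> pairs n \<noteq> {}"
proof -
  assume "n \<ge> 2"
  then have "(0, 1) \<in> pairs n" unfolding pairs_def by auto
  then show ?thesis by blast
qed

lemma sum_pairs:
  "(\<Sum>(i,j)\<in>pairs n. (g i j :: real)) = (\<Sum>i<n. (\<Sum>j<n. g i j) - g i i)"
  unfolding pairs_Sigma
  by (simp add: sum.Sigma[symmetric] sum_diff1)

lemma finite_set_usd_step:
  assumes "n \<ge> 2" shows "finite (set_pmf (usd_step n p c))"
proof -
  have sp: "set_pmf (pmf_of_set (pairs n)) = pairs n"
    using pairs_ne[OF assms] pairs_finite by simp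
  have "set_pmf (usd_step n p c) \<subseteq> (\<Union>(i,j)\<in>pairs n. (\<lambda>s. c(i := s)) ` set_pmf (usd_interact p (c i) (c j)))"
  proof (rule subsetI)
    fix x assume "x \<in> set_pmf (usd_step n p c)"
    then obtain i j s where "(i, j) \<in> pairs n" "s \<in> set_pmf (usd_interact p (c i) (c j))" "x = c(i := s)"
      unfolding usd_step_def pairs_def[symmetric] by (auto simp: sp)
    then show "x \<in> (\<Union>(i,j)\<in>pairs n. (\<lambda>s. c(i := s)) ` set_pmf (usd_interact p (c i) (c j)))"
      by blast
  qed
  moreover have "finite (\<Union>(i,j)\<in>pairs n. (\<lambda>s. c(i := s)) ` set_pmf (usd_interact p (c i) (c j)))"
    using pairs_finite finite_set_usd_interact by auto
  ultimately show ?thesis by (rule finite_subset)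
qed

lemma step_exp:
  assumes "n \<ge> 2" "0 \<le> p" "p \<le> 1"
  shows "real (n * (n - 1)) * measure_pmf.expectation (usd_step n p c) (\<lambda>c'. F (cnt1 n c') (cnt2 n c'))
    = (\<Sum>i<n. (\<Sum>j<n. Hv p F (cnt1 n c) (cnt2 n c) (c i) (c j)) - Hv p F (cnt1 n c) (cnt2 n c) (c i) (c i))"
proof -
  let ?h = "\<lambda>c'. F (cnt1 n c') (cnt2 n c')"
  have "measure_pmf.expectation (usd_step n p c) ?h =
     (\<Sum>a\<in>pairs n. measure_pmf.expectation
         ((\<lambda>(i, j). map_pmf (\<lambda>s. c(i := s)) (usd_interact p (c i) (c j))) a) ?h /\<^sub>R real (card (pairs n)))"
    unfolding usd_step_def pairs_def[symmetric]
    by (rule pmf_expectation_bind_pmf_of_set)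
       (use pairs_ne[OF assms(1)] pairs_finite finite_set_usd_interact in auto)
  also have "\<dots> = (\<Sum>a\<in>pairs n. Hv p F (cnt1 n c) (cnt2 n c) (c (fst a)) (c (snd a)) / real (n * (n - 1)))"
  proof (rule sum.cong[OF refl])
    fix a assume "a \<in> pairs n"
    then obtain i j where a: "a = (i, j)" "i < n" by (auto simp: pairs_def)
    show "measure_pmf.expectation
         ((\<lambda>(i, j). map_pmf (\<lambda>s. c(i := s)) (usd_interact p (c i) (c j))) a) ?h /\<^sub>R real (card (pairs n))
        = Hv p F (cnt1 n c) (cnt2 n c) (c (fst a)) (c (snd a)) / real (n * (n - 1))"
      using inner_exp[OF a(2) assms(2,3), of c "c j" F] a(1)
      by (simp add: pairs_card divide_inverse_commute del: integral_map_pmf)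
  qed
  also have "\<dots> = (\<Sum>(i,j)\<in>pairs n. Hv p F (cnt1 n c) (cnt2 n c) (c i) (c j)) / real (n * (n - 1))"
    by (simp add: sum_divide_distrib case_prod_beta)
  finally show ?thesis
    using assms(1) by (simp add: sum_pairs)
qed

lemma step_drift:
  assumes "n \<ge> 2" "0 \<le> p" "p \<le> 1"
  shows "real (n * (n - 1)) * (measure_pmf.expectation (usd_step n p c) (\<lambda>c'. F (cnt1 n c') (cnt2 n c'))
           - F (cnt1 n c) (cnt2 n c))
    = real (cnt1 n c) * real (cnt2 n c) * (1 - p) * (F (cnt1 n c - 1) (cnt2 n c) - F (cnt1 n c) (cnt2 n c))
    + real (cnt2 n c) * real (cnt1 n c) * (F (cnt1 n c) (cnt2 n c - 1) - F (cnt1 n c) (cnt2 n c))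
    + real (cntU n c) * real (cnt1 n c) * (F (cnt1 n c + 1) (cnt2 n c) - F (cnt1 n c) (cnt2 n c))
    + real (cntU n c) * real (cnt2 n c) * (F (cnt1 n c) (cnt2 n c + 1) - F (cnt1 n c) (cnt2 n c))"
proof -
  define a where "a = cnt1 n c"
  define b where "b = cnt2 n c"
  define u where "u = cntU n c"
  let ?H = "Hv p F a b"
  have tot: "real n = real a + real b + real u"
    using cnt_total[of n c] unfolding a_def b_def u_def by linarith
  have nn: "real (n * (n - 1)) = real n * real n - real n"
    using assms(1) by (simp add: of_nat_diff algebra_simps)
  have diag: "?H s s = F a b" for s
    by (cases s) (auto simp: Hv_def)
  have "(\<Sum>i<n. (\<Sum>j<n. ?H (c i) (c j)) - ?H (c i) (c i))
      = (\<Sum>i<n. real a * ?H (c i) One + real b * ?H (c i) Two + real u * ?H (c i) Und) - real n * F a b"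
  proof -
    have i1: "(\<Sum>j<n. ?H (c i) (c j)) = real a * ?H (c i) One + real b * ?H (c i) Two + real u * ?H (c i) Und" for i
      using sum_states[where \<phi>="?H (c i)" and n=n and c=c] unfolding a_def b_def u_def .
    have i2: "(\<Sum>i<n. ?H (c i) (c i)) = real n * F a b"
      by (simp add: diag)
    show ?thesis by (simp add: sum_subtractf i1 i2)
  qed
  also have "\<dots> = real a * (real a * ?H One One + real b * ?H One Two + real u * ?H One Und)
     + real b * (real a * ?H Two One + real b * ?H Two Two + real u * ?H Two Und)
     + real u * (real a * ?H Und One + real b * ?H Und Two + real u * ?H Und Und) - real n * F a b"
    by (subst sum_states) (simp add: a_def b_def u_def)
  finally have e: "real (n * (n - 1)) * measure_pmf.expectation (usd_step n p c) (\<lambda>c'. F (cnt1 n c') (cnt2 n c'))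
     = \<dots>" using step_exp[OF assms, where F=F and c=c] unfolding a_def b_def by simp
  show ?thesis
    unfolding a_def[symmetric] b_def[symmetric] u_def[symmetric] right_diff_distrib e
    unfolding nn tot by (simp add: Hv_def algebra_simps)
qed

section \<open>Supermartingale argument along trajectories\<close>

fun bad :: "(cfg \<Rightarrow> bool) \<Rightarrow> nat \<Rightarrow> cfg list \<Rightarrow> bool" where
  "bad G n [] = True"
| "bad G n [x] = (\<not> G x \<or> cnt2 n x > 0)"
| "bad G n (x # y # ys) = (\<not> G x \<or> bad G n (y # ys))"

lemma finite_set_traj: "n \<ge> 2 \<Longrightarrow> finite (set_pmf (usd_traj n p k c))"
proof (induction k arbitrary: c)
  case 0 then show ?case by simp
next
  case (Suc k) then show ?case using finite_set_usd_step[OF Suc.prems] by simp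
qed

lemma exp_fin:
  fixes f :: "'a \<Rightarrow> real"
  assumes "finite (set_pmf M)"
  shows "measure_pmf.expectation M f = (\<Sum>a\<in>set_pmf M. pmf M a * f a)"
  by (subst integral_measure_pmf[OF assms]) auto

lemma prob_as_exp: "measure_pmf.prob M A = measure_pmf.expectation M (indicator A)"
  by simp

lemma traj_bound:
  assumes n2: "n \<ge> 2" and p: "0 \<le> p" "p \<le> 1" and th: "\<theta> \<ge> 0" and rh: "\<rho> \<ge> 1"
    and U0: "\<And>c. U c \<ge> 0" and V0: "\<And>c. V c \<ge> 0"
    and hU: "\<And>c. \<not> G c \<Longrightarrow> U c \<ge> 1"
    and hV: "\<And>c. G c \<Longrightarrow> cnt2 n c > 0 \<Longrightarrow> V c \<ge> 1"
    and dU: "\<And>c. G c \<Longrightarrow> measure_pmf.expectation (usd_step n p c) U \<le> \<rho> * U c"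
    and dV: "\<And>c. G c \<Longrightarrow> measure_pmf.expectation (usd_step n p c) V \<le> \<theta> * V c"
  shows "measure_pmf.prob (usd_traj n p k c) {xs. bad G n xs} \<le> \<rho> ^ k * U c + \<theta> ^ k * V c"
proof (induction k arbitrary: c)
  case 0
  show ?case
  proof (cases "G c \<and> cnt2 n c > 0")
    case True
    then show ?thesis using hV[of c] U0[of c] by (simp add: indicator_def)
  next
    case False
    show ?thesis
    proof (cases "G c")
      case True then show ?thesis using False U0[of c] V0[of c] by (simp add: indicator_def)
    next
      case False then show ?thesis using hU[of c] V0[of c] by (simp add: indicator_def)
    qed
  qed
next
  case (Suc k)
  have pk: "\<rho> ^ k \<ge> 1" "\<theta> ^ k \<ge> 0" using rh th by auto
  show ?case
  proof (cases "G c")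
    case False
    have "measure_pmf.prob (usd_traj n p (Suc k) c) {xs. bad G n xs} \<le> 1" by simp
    also have "1 \<le> U c" using hU[OF False] .
    also have "U c \<le> \<rho> ^ Suc k * U c"
      using U0[of c] one_le_power[OF rh, of "Suc k"] by (simp add: mult_le_cancel_right1)
    also have "\<dots> \<le> \<rho> ^ Suc k * U c + \<theta> ^ Suc k * V c"
      using V0[of c] th by simp
    finally show ?thesis .
  next
    case True
    let ?S = "set_pmf (usd_step n p c)"
    let ?M = "usd_step n p c"
    have fS: "finite ?S" using finite_set_usd_step[OF n2] .
    have "measure_pmf.prob (usd_traj n p (Suc k) c) {xs. bad G n xs}
        = (\<Sum>a\<in>?S. pmf ?M a * measure_pmf.prob (usd_traj n p k a) ((#) c -` {xs. bad G n xs}))"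
      unfolding prob_as_exp usd_traj.simps
      by (subst pmf_expectation_bind[OF fS]) (auto simp: finite_set_traj[OF n2])
    also have "\<dots> \<le> (\<Sum>a\<in>?S. pmf ?M a * (\<rho> ^ k * U a + \<theta> ^ k * V a))"
    proof (rule sum_mono, rule mult_left_mono)
      fix a
      have sub: "(#) c -` {xs. bad G n xs} \<subseteq> {xs. bad G n xs}"
      proof
        fix xs assume "xs \<in> (#) c -` {xs. bad G n xs}"
        then show "xs \<in> {xs. bad G n xs}" using True by (cases xs) auto
      qed
      have "measure_pmf.prob (usd_traj n p k a) ((#) c -` {xs. bad G n xs})
          \<le> measure_pmf.prob (usd_traj n p k a) {xs. bad G n xs}"
        by (rule measure_pmf.finite_measure_mono[OF sub]) simp
      also have "\<dots> \<le> \<rho> ^ k * U a + \<theta> ^ k * V a" by (rule Suc.IH)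
      finally show "measure_pmf.prob (usd_traj n p k a) ((#) c -` {xs. bad G n xs}) \<le> \<rho> ^ k * U a + \<theta> ^ k * V a" .
    qed simp
    also have "\<dots> = \<rho> ^ k * measure_pmf.expectation ?M U + \<theta> ^ k * measure_pmf.expectation ?M V"
      by (simp add: exp_fin[OF fS] sum_distrib_left sum.distrib algebra_simps)
    also have "\<dots> \<le> \<rho> ^ k * (\<rho> * U c) + \<theta> ^ k * (\<theta> * V c)"
      using dU[OF True] dV[OF True] pk by (intro add_mono mult_left_mono) auto
    finally show ?thesis by (simp add: algebra_simps)
  qed
qed

section \<open>Real inequalities for the potentials\<close>

lemma V_core:
  fixes a b u n q cs :: real
  assumes cs: "cs > 0" and w: "a - q * b \<ge> cs * n / 2" and n8: "cs * n \<ge> 8"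
    and n80: "cs * cs * n \<ge> 80" and q: "0 \<le> q" "q \<le> 1" and b: "b \<ge> 0" and u: "u \<ge> 0"
    and tot: "a + b + u = n"
  shows "q * b / (a - 1) - 1 - u / (a + 1) + u / a \<le> - (2 * cs / 5) * (n - 1) / a"
proof -
  have qb: "q * b \<ge> 0" using q b by simp
  have a1: "a - 1 \<ge> cs * n / 4" using w qb n8 by linarith
  have apos: "a > 0" using a1 n8 by linarith
  have a1pos: "a - 1 > 0" using a1 n8 by linarith
  have "q * b \<le> b" using q b by (simp add: mult_left_le_one_le)
  then have qbn: "q * b \<le> n" using u tot apos by linarith
  have e: "a * (q * b / (a - 1) - 1 - u / (a + 1) + u / a) = - (a - q * b) + q * b / (a - 1) + u / (a + 1)"
  proof -
    have f1: "a * (q * b / (a - 1)) = q * b + q * b / (a - 1)"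
      using a1pos by (simp add: field_simps)
    have f2: "a * (u / (a + 1)) = u - u / (a + 1)"
      using apos by (simp add: field_simps)
    have f3: "a * (u / a) = u" using apos by simp
    have "a * (q * b / (a - 1) - 1 - u / (a + 1) + u / a) = a * (q * b / (a - 1)) - a * 1 - a * (u / (a + 1)) + a * (u / a)"
      by (simp only: distrib_left right_diff_distrib)
    then show ?thesis using f1 f2 f3 by linarith
  qed
  have t1: "q * b / (a - 1) \<le> 4 / cs"
  proof -
    have "q * b / (a - 1) \<le> n / (a - 1)" using qbn a1pos by (simp add: divide_right_mono)
    also have "\<dots> \<le> n / (cs * n / 4)"
      using a1 a1pos n8 cs tot b u by (intro divide_left_mono) (auto intro: mult_pos_pos)
    also have "\<dots> = 4 / cs" using n8 cs by (auto simp: field_simps)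
    finally show ?thesis .
  qed
  have t2: "u / (a + 1) \<le> 4 / cs"
  proof -
    have "u / (a + 1) \<le> n / (a + 1)" using tot b apos by (simp add: divide_right_mono)
    also have "\<dots> \<le> n / (cs * n / 4)"
      using a1 a1pos n8 cs tot b u by (intro divide_left_mono) (auto intro: mult_pos_pos)
    also have "\<dots> = 4 / cs" using n8 cs by (auto simp: field_simps)
    finally show ?thesis .
  qed
  have t3: "4 / cs + 4 / cs \<le> cs * n / 10"
  proof -
    have "4 / cs + 4 / cs = 8 / cs" by simp
    also have "\<dots> \<le> cs * n / 10" using cs n80 by (simp add: field_simps)
    finally show ?thesis .
  qed
  have t4: "(2 * cs / 5) * (n - 1) = 2 / 5 * (cs * n) - 2 / 5 * cs" by (simp add: field_simps)
  have "a * (q * b / (a - 1) - 1 - u / (a + 1) + u / a) \<le> - (2 * cs / 5) * (n - 1)"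
    unfolding e using w t1 t2 t3 t4 cs by linarith
  then have "(a * (q * b / (a - 1) - 1 - u / (a + 1) + u / a)) / a \<le> (- (2 * cs / 5) * (n - 1)) / a"
    using apos by (intro divide_right_mono) auto
  then show ?thesis using apos by simp
qed

lemma exp_le_quad:
  fixes y :: real
  assumes "\<bar>y\<bar> \<le> 1"
  shows "exp y \<le> 1 + y + y\<^sup>2"
proof (cases "y \<ge> 0")
  case True then show ?thesis using exp_bound[of y] assms by simp
next
  case False
  define t where "t = - y"
  have t: "0 < t" "t \<le> 1" using False assms by (auto simp: t_def)
  have "exp (-t) * (1 + t) \<le> exp (-t) * exp t"
    by (intro mult_left_mono) (auto simp: exp_ge_add_one_self add.commute)
  also have "\<dots> = 1" by (simp add: exp_minus)
  finally have "exp (-t) * (1 + t) \<le> 1" .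
  also have "1 \<le> (1 - t + t\<^sup>2) * (1 + t)" using t by (simp add: algebra_simps power2_eq_square power3_eq_cube)
  finally have "exp (-t) \<le> 1 - t + t\<^sup>2" using t by (simp add: mult_le_cancel_right)
  then show ?thesis by (simp add: t_def)
qed

lemma U_core:
  fixes a b u n q l :: real
  assumes l: "0 \<le> l" "l \<le> 1" and q: "0 \<le> q" "q \<le> 1" and a: "a \<ge> 0" and b: "b \<ge> 0" and u: "u \<ge> 0"
    and tot: "a + b + u = n" and w: "a - q * b \<ge> 0" and n2: "n \<ge> 2"
  shows "a * b * q * (exp l - 1) + b * a * (exp (- (l * q)) - 1) + u * a * (exp (- l) - 1)
       + u * b * (exp (l * q) - 1) \<le> 2 * l\<^sup>2 * (n * (n - 1))"
proof -
  have lq: "0 \<le> l * q" "l * q \<le> l" using l q by (auto simp: mult_left_le)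
  have e1: "exp l - 1 \<le> l + l\<^sup>2" using exp_le_quad[of l] l by simp
  have e2: "exp (- (l * q)) - 1 \<le> - (l * q) + l\<^sup>2"
  proof -
    have "exp (- (l * q)) \<le> 1 + - (l * q) + (- (l * q))\<^sup>2" using exp_le_quad[of "- (l * q)"] lq l by simp
    moreover have "(- (l * q))\<^sup>2 \<le> l\<^sup>2" using lq by (simp add: power_mono)
    ultimately show ?thesis by simp
  qed
  have e3: "exp (- l) - 1 \<le> - l + l\<^sup>2" using exp_le_quad[of "- l"] l by simp
  have e4: "exp (l * q) - 1 \<le> l * q + l\<^sup>2"
  proof -
    have "exp (l * q) \<le> 1 + l * q + (l * q)\<^sup>2" using exp_le_quad[of "l * q"] lq l by simp
    moreover have "(l * q)\<^sup>2 \<le> l\<^sup>2" using lq by (simp add: power_mono)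
    ultimately show ?thesis by simp
  qed
  have abq: "a * b * q \<ge> 0" "b * a \<ge> 0" "u * a \<ge> 0" "u * b \<ge> 0" using a b u q by auto
  have "a * b * q * (exp l - 1) + b * a * (exp (- (l * q)) - 1) + u * a * (exp (- l) - 1)
       + u * b * (exp (l * q) - 1)
     \<le> a * b * q * (l + l\<^sup>2) + b * a * (- (l * q) + l\<^sup>2) + u * a * (- l + l\<^sup>2) + u * b * (l * q + l\<^sup>2)"
    using e1 e2 e3 e4 abq by (intro add_mono mult_left_mono) auto
  also have "\<dots> = l\<^sup>2 * (a * b * q + a * b + u * a + u * b) - l * (u * (a - q * b))"
    by (simp add: algebra_simps)
  also have "\<dots> \<le> l\<^sup>2 * (a * b * q + a * b + u * a + u * b)"
    using l u w by simp
  also have "\<dots> \<le> l\<^sup>2 * (n * n)"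
  proof (rule mult_left_mono)
    have "a * b * q \<le> a * b" using a b q by (simp add: mult_left_le)
    moreover have "n * n = (a + b + u) * (a + b + u)" using tot by simp
    ultimately show "a * b * q + a * b + u * a + u * b \<le> n * n"
      using a b u by (simp add: algebra_simps) (smt (verit) mult_nonneg_nonneg)
  qed simp
  also have "\<dots> \<le> 2 * l\<^sup>2 * (n * (n - 1))"
  proof -
    have "2 * n \<le> n * n" using mult_right_mono[OF n2, of n] n2 by simp
    then have "n * n \<le> 2 * (n * (n - 1))" by (simp add: algebra_simps)
    from mult_left_mono[OF this, of "l\<^sup>2"] show ?thesis by (simp add: algebra_simps)
  qed
  finally show ?thesis .
qed

section \<open>Drift of the two potentials\<close>

definition Vf :: "nat \<Rightarrow> cfg \<Rightarrow> real" where
  "Vf n c = real n * real (cnt2 n c) / real (cnt1 n c)"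

definition Uf :: "real \<Rightarrow> real \<Rightarrow> real \<Rightarrow> nat \<Rightarrow> cfg \<Rightarrow> real" where
  "Uf l cs p n c = exp (- l * (wbias p n c - cs * real n / 2))"

lemma V_drift:
  assumes n2: "n \<ge> 2" and p: "0 \<le> p" "p \<le> 1" and cs: "cs > 0" and n8: "cs * real n \<ge> 8"
    and n80: "cs * cs * real n \<ge> 80" and G: "wbias p n c \<ge> cs * real n / 2"
  shows "measure_pmf.expectation (usd_step n p c) (Vf n) \<le> (1 - 2 * cs / (5 * real n)) * Vf n c"
proof -
  define F :: "nat \<Rightarrow> nat \<Rightarrow> real" where "F = (\<lambda>a b. real n * real b / real a)"
  have VF: "Vf n = (\<lambda>c'. F (cnt1 n c') (cnt2 n c'))" by (auto simp: F_def Vf_def)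
  define a where "a = cnt1 n c"
  define b where "b = cnt2 n c"
  define u where "u = cntU n c"
  define A where "A = real a"
  define B where "B = real b"
  define Uu where "Uu = real u"
  define q where "q = 1 - p"
  define E where "E = measure_pmf.expectation (usd_step n p c) (Vf n)"
  define N where "N = real (n * (n - 1))"
  have q: "0 \<le> q" "q \<le> 1" using p by (auto simp: q_def)
  have tot: "A + B + Uu = real n" using cnt_total[of n c] by (simp add: A_def B_def Uu_def a_def b_def u_def flip: of_nat_add)
  have w: "A - q * B \<ge> cs * real n / 2" using G by (simp add: wbias_def A_def B_def q_def a_def b_def)
  have B0: "B \<ge> 0" "Uu \<ge> 0" by (auto simp: B_def Uu_def)
  have qB: "q * B \<ge> 0" using q B0 by simp
  have A4: "A \<ge> 4" using w qB n8 by linarith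
  have a1: "a \<ge> 1" using A4 by (simp add: A_def)
  have Npos: "N > 0" using n2 by (simp add: N_def)
  have drift: "N * (E - F a b) = A * B * q * (F (a - 1) b - F a b) + B * A * (F a (b - 1) - F a b)
      + Uu * A * (F (a + 1) b - F a b) + Uu * B * (F a (b + 1) - F a b)"
    using step_drift[OF n2 p, where F=F and c=c]
    by (simp add: VF E_def N_def A_def B_def Uu_def q_def a_def b_def u_def)
  have Fab: "F a b = real n * B / A" by (simp add: F_def B_def A_def)
  have "N * (E - F a b) \<le> - (2 * cs / 5) * (real n - 1) * F a b"
  proof (cases "b = 0")
    case True
    then show ?thesis using drift by (auto simp: F_def B_def)
  next
    case False
    then have b1: "b \<ge> 1" by simp
    have Am: "A - 1 \<noteq> 0" "A \<noteq> 0" "A + 1 \<noteq> 0" using A4 by auto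
    have g1: "F (a - 1) b = real n * B / (A - 1)" using a1 by (simp add: F_def A_def B_def of_nat_diff)
    have g2: "F a (b - 1) = real n * (B - 1) / A" using b1 by (simp add: F_def A_def B_def of_nat_diff)
    have g3: "F (a + 1) b = real n * B / (A + 1)" by (simp add: F_def A_def B_def)
    have g4: "F a (b + 1) = real n * (B + 1) / A" by (simp add: F_def A_def B_def)
    have h1: "A * B * q * (F (a - 1) b - F a b) = real n * B * (q * B / (A - 1))"
      unfolding g1 Fab using Am by (simp add: field_simps)
    have h2: "B * A * (F a (b - 1) - F a b) = - (real n * B)"
      unfolding g2 Fab using Am by (simp add: field_simps)
    have h3: "Uu * A * (F (a + 1) b - F a b) = - (real n * B * (Uu / (A + 1)))"
    proof -
      have k1: "A * (real n * B / (A + 1)) = real n * B - real n * B / (A + 1)"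
        using Am by (simp add: field_simps)
      have k2: "A * (real n * B / A) = real n * B" using Am by simp
      have "Uu * A * (F (a + 1) b - F a b) = Uu * (A * (real n * B / (A + 1)) - A * (real n * B / A))"
        unfolding g3 Fab by (simp add: algebra_simps)
      also have "\<dots> = - (real n * B * (Uu / (A + 1)))" unfolding k1 k2 by (simp add: algebra_simps)
      finally show ?thesis .
    qed
    have h4: "Uu * B * (F a (b + 1) - F a b) = real n * B * (Uu / A)"
      unfolding g4 Fab using Am by (simp add: field_simps)
    have core: "q * B / (A - 1) - 1 - Uu / (A + 1) + Uu / A \<le> - (2 * cs / 5) * (real n - 1) / A"
      by (rule V_core[OF cs w n8 n80 q B0(1) B0(2) tot])
    have "N * (E - F a b) = real n * B * (q * B / (A - 1) - 1 - Uu / (A + 1) + Uu / A)"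
      unfolding drift h1 h2 h3 h4 by (simp add: algebra_simps)
    also have "\<dots> \<le> real n * B * (- (2 * cs / 5) * (real n - 1) / A)"
      using core B0 by (intro mult_left_mono) auto
    also have "\<dots> = - (2 * cs / 5) * (real n - 1) * F a b" unfolding Fab by simp
    finally show ?thesis .
  qed
  also have "\<dots> = N * (- (2 * cs / (5 * real n)) * F a b)"
    using n2 by (simp add: N_def of_nat_diff field_simps)
  finally have X: "N * (E - F a b) \<le> N * (- (2 * cs / (5 * real n)) * F a b)" .
  have "E - F a b \<le> - (2 * cs / (5 * real n)) * F a b"
    by (rule mult_left_le_imp_le[OF X Npos])
  then show ?thesis unfolding E_def VF by (simp add: a_def b_def algebra_simps)
qed

lemma U_drift:
  assumes n2: "n \<ge> 2" and p: "0 \<le> p" "p \<le> 1" and cs: "cs > 0"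
    and l: "0 \<le> l" "l \<le> 1" and G: "wbias p n c \<ge> cs * real n / 2"
  shows "measure_pmf.expectation (usd_step n p c) (Uf l cs p n) \<le> (1 + 2 * l\<^sup>2) * Uf l cs p n c"
proof -
  define q where "q = 1 - p"
  define F :: "nat \<Rightarrow> nat \<Rightarrow> real" where "F = (\<lambda>a b. exp (- l * (real a - q * real b - cs * real n / 2)))"
  have UF: "Uf l cs p n = (\<lambda>c'. F (cnt1 n c') (cnt2 n c'))" by (auto simp: F_def Uf_def wbias_def q_def)
  define a where "a = cnt1 n c"
  define b where "b = cnt2 n c"
  define u where "u = cntU n c"
  define A where "A = real a"
  define B where "B = real b"
  define Uu where "Uu = real u"
  define E where "E = measure_pmf.expectation (usd_step n p c) (Uf l cs p n)"
  define N where "N = real (n * (n - 1))"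
  define W where "W = F a b"
  have q: "0 \<le> q" "q \<le> 1" using p by (auto simp: q_def)
  have tot: "A + B + Uu = real n" using cnt_total[of n c] by (simp add: A_def B_def Uu_def a_def b_def u_def flip: of_nat_add)
  have w: "A - q * B \<ge> cs * real n / 2" using G by (simp add: wbias_def A_def B_def q_def a_def b_def)
  have B0: "B \<ge> 0" "Uu \<ge> 0" "A \<ge> 0" by (auto simp: B_def Uu_def A_def)
  have qB: "q * B \<ge> 0" using q B0 by simp
  have "cs * real n \<ge> 0" using cs by simp
  then have w0: "A - q * B \<ge> 0" using w by linarith
  have Npos: "N > 0" using n2 by (simp add: N_def)
  have Wpos: "W > 0" by (simp add: W_def F_def)
  have drift: "N * (E - W) = A * B * q * (F (a - 1) b - W) + B * A * (F a (b - 1) - W)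
      + Uu * A * (F (a + 1) b - W) + Uu * B * (F a (b + 1) - W)"
    using step_drift[OF n2 p, where F=F and c=c]
    by (simp add: UF E_def N_def A_def B_def Uu_def q_def a_def b_def u_def W_def)
  have nn: "real n \<ge> 2" using n2 by simp
  have WY: "exp (- l * (A - q * B - cs * real n / 2)) = W" by (simp add: W_def F_def A_def B_def)
  have g1: "A * B * q * (F (a - 1) b - W) = W * (A * B * q * (exp l - 1))"
  proof (cases "a = 0")
    case True then show ?thesis by (simp add: A_def)
  next
    case False
    have "F (a - 1) b = exp (- l * (A - q * B - cs * real n / 2) + l)"
      using False by (simp add: F_def A_def B_def of_nat_diff algebra_simps)
    then have "F (a - 1) b = W * exp l" by (simp only: exp_add WY)
    then show ?thesis by (simp add: algebra_simps)
  qed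
  have g2: "B * A * (F a (b - 1) - W) = W * (B * A * (exp (- (l * q)) - 1))"
  proof (cases "b = 0")
    case True then show ?thesis by (simp add: B_def)
  next
    case False
    have "F a (b - 1) = exp (- l * (A - q * B - cs * real n / 2) + - (l * q))"
      using False by (simp add: F_def A_def B_def of_nat_diff algebra_simps)
    then have "F a (b - 1) = W * exp (- (l * q))" by (simp only: exp_add WY)
    then show ?thesis by (simp add: algebra_simps)
  qed
  have g3: "Uu * A * (F (a + 1) b - W) = W * (Uu * A * (exp (- l) - 1))"
  proof -
    have "F (a + 1) b = exp (- l * (A - q * B - cs * real n / 2) + - l)"
      by (simp add: F_def A_def B_def algebra_simps)
    then have "F (a + 1) b = W * exp (- l)" by (simp only: exp_add WY)
    then show ?thesis by (simp add: algebra_simps)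
  qed
  have g4: "Uu * B * (F a (b + 1) - W) = W * (Uu * B * (exp (l * q) - 1))"
  proof -
    have "F a (b + 1) = exp (- l * (A - q * B - cs * real n / 2) + l * q)"
      by (simp add: F_def A_def B_def algebra_simps)
    then have "F a (b + 1) = W * exp (l * q)" by (simp only: exp_add WY)
    then show ?thesis by (simp add: algebra_simps)
  qed
  have core: "A * B * q * (exp l - 1) + B * A * (exp (- (l * q)) - 1) + Uu * A * (exp (- l) - 1)
       + Uu * B * (exp (l * q) - 1) \<le> 2 * l\<^sup>2 * (real n * (real n - 1))"
    by (rule U_core[OF l q B0(3) B0(1) B0(2) tot w0 nn])
  have "N * (E - W) = W * (A * B * q * (exp l - 1) + B * A * (exp (- (l * q)) - 1) + Uu * A * (exp (- l) - 1)
       + Uu * B * (exp (l * q) - 1))"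
    unfolding drift g1 g2 g3 g4 by (simp add: algebra_simps)
  also have "\<dots> \<le> W * (2 * l\<^sup>2 * (real n * (real n - 1)))"
    using core Wpos by (intro mult_left_mono) auto
  also have "\<dots> = N * (2 * l\<^sup>2 * W)" using n2 by (simp add: N_def of_nat_diff algebra_simps)
  finally have X: "N * (E - W) \<le> N * (2 * l\<^sup>2 * W)" .
  have "E - W \<le> 2 * l\<^sup>2 * W" by (rule mult_left_le_imp_le[OF X Npos])
  then show ?thesis unfolding E_def by (simp add: W_def UF a_def b_def algebra_simps)
qed

lemma len_traj: "xs \<in> set_pmf (usd_traj n p k c) \<Longrightarrow> length xs = Suc k"
proof (induction k arbitrary: c xs)
  case 0 then show ?case by simp
next
  case (Suc k) then show ?case by auto
qed

lemma notbad: "\<not> bad G n xs \<Longrightarrow> xs \<noteq> [] \<and> cnt2 n (last xs) = 0"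
  by (induction G n xs rule: bad.induct) auto

lemma pow_le_exp: "0 \<le> 1 + x \<Longrightarrow> (1 + x) ^ k \<le> exp (x * real k)"
proof -
  assume h: "0 \<le> 1 + x"
  have "(1 + x) ^ k \<le> exp x ^ k"
    by (rule power_mono) (use h exp_ge_add_one_self[of x] in \<open>auto simp: add.commute\<close>)
  also have "\<dots> = exp (x * real k)" by (simp add: exp_of_nat_mult[symmetric] mult.commute)
  finally show ?thesis .
qed

lemma eventual_conds:
  fixes cs :: real assumes cs: "cs > 0"
  shows "\<forall>\<^sub>F n in sequentially. 2 \<le> n \<and> 80 \<le> cs * cs * real n \<and> 8 \<le> cs * real n \<and> 1 \<le> ln (real n)
     \<and> exp (- (cs ^ 3 / 640 * real n / ln (real n))) * (2 * (real n)\<^sup>2) \<le> 1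
     \<and> exp 1 * real n / (cs * real n ^ 8) \<le> 1 / (2 * (real n)\<^sup>2)"
proof -
  have c3: "cs ^ 3 / 640 > 0" "cs * cs > 0" using cs by auto
  show ?thesis
    by (intro eventually_conj eventually_ge_at_top) (use cs c3 in real_asymp)+
qed

lemma main_bound:
  fixes p cs :: real and n :: nat and c :: cfg
  assumes p: "0 \<le> p" "p \<le> 1" and cs: "cs > 0" "cs \<le> 1"
    and n2: "2 \<le> n" and n80: "80 \<le> cs * cs * real n" and n8: "8 \<le> cs * real n"
    and ln1: "1 \<le> ln (real n)"
    and C5: "exp (- (cs ^ 3 / 640 * real n / ln (real n))) * (2 * (real n)\<^sup>2) \<le> 1"
    and C6: "exp 1 * real n / (cs * real n ^ 8) \<le> 1 / (2 * (real n)\<^sup>2)"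
    and init: "wbias p n c \<ge> cs * real n"
  shows "measure_pmf.prob
             (usd_traj n p (nat \<lfloor>20 / cs * real n * ln (real n)\<rfloor>) c)
             {xs. \<exists>t < length xs. real t \<le> 20 / cs * real n * ln (real n)
                                  \<and> cnt2 n (xs ! t) = 0}
           \<ge> 1 - 1 / (real n)^2"
proof -
  define L where "L = ln (real n)"
  define T where "T = 20 / cs * real n * L"
  define K where "K = nat \<lfloor>T\<rfloor>"
  define l where "l = cs\<^sup>2 / (160 * L)"
  define \<theta> where "\<theta> = 1 - 2 * cs / (5 * real n)"
  define \<rho> where "\<rho> = 1 + 2 * l\<^sup>2"
  define G where "G = (\<lambda>c. wbias p n c \<ge> cs * real n / 2)"
  define E where "E = {xs. \<exists>t < length xs. real t \<le> T \<and> cnt2 n (xs ! t) = 0}"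
  have Lpos: "L \<ge> 1" using ln1 by (simp add: L_def)
  have npos: "real n \<ge> 2" using n2 by simp
  have Tpos: "T \<ge> 0" using cs Lpos npos by (simp add: T_def)
  have KT: "real K \<le> T" using Tpos by (simp add: K_def)
  have KT1: "real K \<ge> T - 1" using Tpos by (simp add: K_def)
  have l0: "0 \<le> l" using Lpos by (simp add: l_def)
  have l1: "l \<le> 1"
  proof -
    have "cs\<^sup>2 \<le> 1" using cs by (simp add: power_le_one)
    then show ?thesis using Lpos by (simp add: l_def field_simps)
  qed
  have y0: "0 \<le> 2 * cs / (5 * real n)" using cs by simp
  have y1: "2 * cs / (5 * real n) \<le> 1" using cs n8 npos by (simp add: field_simps)
  have th0: "\<theta> \<ge> 0" using y1 by (simp add: \<theta>_def)
  have rh1: "\<rho> \<ge> 1" by (simp add: \<rho>_def)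
  have bound: "measure_pmf.prob (usd_traj n p K c) {xs. bad G n xs} \<le> \<rho> ^ K * Uf l cs p n c + \<theta> ^ K * Vf n c"
  proof (rule traj_bound[OF n2 p th0 rh1])
    show "Uf l cs p n c \<ge> 0" for c by (simp add: Uf_def)
    show "Vf n c \<ge> 0" for c by (simp add: Vf_def)
    show "Uf l cs p n c \<ge> 1" if "\<not> G c" for c
      using that l0 by (simp add: Uf_def G_def mult_nonneg_nonpos)
    show "Vf n c \<ge> 1" if "G c" "cnt2 n c > 0" for c
    proof -
      have "real (cnt1 n c) \<ge> wbias p n c" using p by (simp add: wbias_def)
      moreover have "cs * real n > 0" using cs npos by simp
      ultimately have apos: "real (cnt1 n c) > 0" using that(1) unfolding G_def by linarith
      have "n * 1 \<le> n * cnt2 n c" using that(2) by (intro mult_le_mono2) simp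
      then have "cnt1 n c \<le> n * cnt2 n c" using cnt1_le[of n c] by (metis mult.right_neutral le_trans)
      then have "real (cnt1 n c) \<le> real n * real (cnt2 n c)" by (metis of_nat_le_iff of_nat_mult)
      then show ?thesis using apos unfolding Vf_def by (simp add: le_divide_eq)
    qed
    show "measure_pmf.expectation (usd_step n p c) (Uf l cs p n) \<le> \<rho> * Uf l cs p n c" if "G c" for c
      using U_drift[OF n2 p cs(1) l0 l1] that by (simp add: G_def \<rho>_def)
    show "measure_pmf.expectation (usd_step n p c) (Vf n) \<le> \<theta> * Vf n c" if "G c" for c
      using V_drift[OF n2 p cs(1) n8 n80] that by (simp add: G_def \<theta>_def)
  qed
  have P1: "\<rho> ^ K * Uf l cs p n c \<le> 1 / (2 * (real n)\<^sup>2)"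
  proof -
    have r: "\<rho> ^ K \<le> exp (2 * l\<^sup>2 * T)"
    proof -
      have "\<rho> ^ K \<le> exp (2 * l\<^sup>2 * real K)" unfolding \<rho>_def by (rule pow_le_exp) simp
      also have "\<dots> \<le> exp (2 * l\<^sup>2 * T)" using KT by (simp add: mult_left_mono)
      finally show ?thesis .
    qed
    have u: "Uf l cs p n c \<le> exp (- (l * (cs * real n / 2)))"
    proof -
      have "cs * real n / 2 \<le> wbias p n c - cs * real n / 2" using init by linarith
      then have "l * (cs * real n / 2) \<le> l * (wbias p n c - cs * real n / 2)" using l0 by (rule mult_left_mono)
      then show ?thesis unfolding Uf_def exp_le_cancel_iff minus_mult_left by linarith
    qed
    have "\<rho> ^ K * Uf l cs p n c \<le> exp (2 * l\<^sup>2 * T) * exp (- (l * (cs * real n / 2)))"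
      using r u by (intro mult_mono) (auto simp: \<rho>_def Uf_def)
    also have "\<dots> = exp (2 * l\<^sup>2 * T - l * (cs * real n / 2))" by (simp add: exp_add[symmetric])
    also have "2 * l\<^sup>2 * T - l * (cs * real n / 2) = - (cs ^ 3 / 640 * real n / L)"
    proof -
      have Ln: "L \<noteq> 0" "cs \<noteq> 0" using Lpos cs by auto
      have a1: "2 * l\<^sup>2 * T = cs ^ 3 * real n / (640 * L)"
        using Ln by (simp add: l_def T_def power2_eq_square power3_eq_cube field_simps)
      have a2: "l * (cs * real n / 2) = cs ^ 3 * real n / (320 * L)"
        using Ln by (simp add: l_def power2_eq_square power3_eq_cube field_simps)
      show ?thesis unfolding a1 a2 by (simp add: field_simps)
    qed
    also have "exp (- (cs ^ 3 / 640 * real n / L)) \<le> 1 / (2 * (real n)\<^sup>2)"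
    proof -
      have pos: "0 < 2 * (real n)\<^sup>2" using npos by simp
      show ?thesis unfolding pos_le_divide_eq[OF pos] using C5 by (simp add: L_def)
    qed
    finally show ?thesis .
  qed
  have P2: "\<theta> ^ K * Vf n c \<le> 1 / (2 * (real n)\<^sup>2)"
  proof -
    have r: "\<theta> ^ K \<le> exp (1 - 8 * L)"
    proof -
      have "\<theta> ^ K \<le> exp (- (2 * cs / (5 * real n)) * real K)" unfolding \<theta>_def
        using pow_le_exp[of "- (2 * cs / (5 * real n))" K] y1 by simp
      also have "\<dots> \<le> exp (- (2 * cs / (5 * real n)) * (T - 1))"
      proof -
        have "(2 * cs / (5 * real n)) * (T - 1) \<le> (2 * cs / (5 * real n)) * real K"
          using KT1 y0 by (rule mult_left_mono)
        then show ?thesis unfolding exp_le_cancel_iff minus_mult_left by linarith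
      qed
      also have "- (2 * cs / (5 * real n)) * (T - 1) = 2 * cs / (5 * real n) - 8 * L"
        using cs npos by (simp add: T_def field_simps)
      also have "exp (2 * cs / (5 * real n) - 8 * L) \<le> exp (1 - 8 * L)" using y1 by simp
      finally show ?thesis .
    qed
    have e8: "exp (1 - 8 * L) = exp 1 / real n ^ 8"
    proof -
      have "exp (8 * L) = exp L ^ 8" by (simp add: exp_of_nat_mult[symmetric])
      also have "exp L = real n" using npos by (simp add: L_def)
      finally show ?thesis by (simp add: exp_diff)
    qed
    have v: "Vf n c \<le> real n / cs"
    proof -
      have "(1 - p) * real (cnt2 n c) \<ge> 0" using p by simp
      then have a: "real (cnt1 n c) \<ge> cs * real n" using init unfolding wbias_def by linarith
      have apos: "cs * real n > 0" using cs npos by simp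
      have "Vf n c = real n * real (cnt2 n c) / real (cnt1 n c)" by (simp add: Vf_def)
      also have "\<dots> \<le> real n * real n / (cs * real n)"
      proof (rule frac_le)
        show "real n * real (cnt2 n c) \<le> real n * real n"
          using cnt2_le[of n c] by (intro mult_left_mono) auto
      qed (use a apos in auto)
      also have "\<dots> = real n / cs" using npos by simp
      finally show ?thesis .
    qed
    have "\<theta> ^ K * Vf n c \<le> exp 1 / real n ^ 8 * (real n / cs)"
      using r v th0 unfolding e8 by (intro mult_mono) (auto simp: Vf_def)
    also have "\<dots> = exp 1 * real n / (cs * real n ^ 8)" by simp
    also have "\<dots> \<le> 1 / (2 * (real n)\<^sup>2)" by (rule C6)
    finally show ?thesis .
  qed
  have sub: "{xs. \<not> bad G n xs} \<inter> set_pmf (usd_traj n p K c) \<subseteq> E"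
  proof
    fix xs assume h: "xs \<in> {xs. \<not> bad G n xs} \<inter> set_pmf (usd_traj n p K c)"
    then have len: "length xs = Suc K" using len_traj by auto
    have nb: "xs \<noteq> [] \<and> cnt2 n (last xs) = 0" using h notbad by auto
    have "last xs = xs ! K" using nb len by (simp add: last_conv_nth)
    then have "cnt2 n (xs ! K) = 0" using nb by simp
    then show "xs \<in> E" unfolding E_def using len KT by auto
  qed
  have "1 - 1 / (real n)\<^sup>2 \<le> 1 - measure_pmf.prob (usd_traj n p K c) {xs. bad G n xs}"
    using bound P1 P2 by simp
  also have "\<dots> = measure_pmf.prob (usd_traj n p K c) (UNIV - {xs. bad G n xs})"
    by (subst measure_pmf.prob_compl[symmetric]) auto
  also have "UNIV - {xs. bad G n xs} = {xs. \<not> bad G n xs}" by auto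
  also have "measure_pmf.prob (usd_traj n p K c) {xs. \<not> bad G n xs}
      = measure_pmf.prob (usd_traj n p K c) ({xs. \<not> bad G n xs} \<inter> set_pmf (usd_traj n p K c))"
    by (simp add: measure_Int_set_pmf)
  also have "\<dots> \<le> measure_pmf.prob (usd_traj n p K c) E"
    by (rule measure_pmf.finite_measure_mono[OF sub]) simp
  finally show ?thesis unfolding E_def K_def T_def L_def .
qed

theorem lemma2:
  fixes p c_s :: real
  assumes "0 \<le> p" and "p \<le> 1" and "c_s > 0"
  shows "\<exists>n0::nat. \<forall>n\<ge>n0. \<forall>c :: cfg.
           wbias p n c \<ge> c_s * real n \<longrightarrow>
           measure_pmf.prob
             (usd_traj n p (nat \<lfloor>20 / c_s * real n * ln (real n)\<rfloor>) c)
             {xs. \<exists>t < length xs. real t \<le> 20 / c_s * real n * ln (real n)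
                                  \<and> cnt2 n (xs ! t) = 0}
           \<ge> 1 - 1 / (real n)^2"
proof (cases "c_s \<le> 1")
  case False
  show ?thesis
  proof (intro exI[of _ 1] allI impI)
    fix n :: nat and c assume n1: "1 \<le> n" and w: "wbias p n c \<ge> c_s * real n"
    have "wbias p n c \<le> real n"
    proof -
      have "(1 - p) * real (cnt2 n c) \<ge> 0" using assms(1,2) by simp
      moreover have "real (cnt1 n c) \<le> real n" using cnt1_le[of n c] by simp
      ultimately show ?thesis unfolding wbias_def by linarith
    qed
    moreover have "c_s * real n > real n" using False n1 by simp
    ultimately show "measure_pmf.prob
             (usd_traj n p (nat \<lfloor>20 / c_s * real n * ln (real n)\<rfloor>) c)
             {xs. \<exists>t < length xs. real t \<le> 20 / c_s * real n * ln (real n)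
                                  \<and> cnt2 n (xs ! t) = 0}
           \<ge> 1 - 1 / (real n)^2" using w by linarith
  qed
next
  case True
  from eventual_conds[OF assms(3)] obtain n0 where n0: "\<And>n. n \<ge> n0 \<Longrightarrow> 2 \<le> n \<and> 80 \<le> c_s * c_s * real n \<and> 8 \<le> c_s * real n \<and> 1 \<le> ln (real n)
     \<and> exp (- (c_s ^ 3 / 640 * real n / ln (real n))) * (2 * (real n)\<^sup>2) \<le> 1
     \<and> exp 1 * real n / (c_s * real n ^ 8) \<le> 1 / (2 * (real n)\<^sup>2)"
    unfolding eventually_sequentially by blast
  show ?thesis
  proof (intro exI[of _ n0] allI impI)
    fix n :: nat and c assume "n0 \<le> n" and w: "wbias p n c \<ge> c_s * real n"
    then have h: "2 \<le> n \<and> 80 \<le> c_s * c_s * real n \<and> 8 \<le> c_s * real n \<and> 1 \<le> ln (real n)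
     \<and> exp (- (c_s ^ 3 / 640 * real n / ln (real n))) * (2 * (real n)\<^sup>2) \<le> 1
     \<and> exp 1 * real n / (c_s * real n ^ 8) \<le> 1 / (2 * (real n)\<^sup>2)" using n0 by blast
    show "measure_pmf.prob
             (usd_traj n p (nat \<lfloor>20 / c_s * real n * ln (real n)\<rfloor>) c)
             {xs. \<exists>t < length xs. real t \<le> 20 / c_s * real n * ln (real n)
                                  \<and> cnt2 n (xs ! t) = 0}
           \<ge> 1 - 1 / (real n)^2"
      using main_bound[OF assms(1,2,3) True _ _ _ _ _ _ w] h by blast
  qed
qed

end
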